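(* Let $X$ be a $T_1$ topological space. Then $C(X)_F\subseteq T''(X)$ (so that $C(X)_F$ is a subring of $T''(X)$) if and only if $X$ is a nowhere almost $P$-space.
   Context: $C(X)$ is the ring of real-valued continuous functions on $X$; a cozero set is a set $\{x: h(x)\neq 0\}$ with $h\in C(X)$. $T''(X)$ is the ring of all functions $f\colon X\to\mathbb{R}$ for which there is a dense cozero set $U$ of $X$ with $f|_U$ continuous. $C(X)_F$ is the ring of all functions $f\colon X\to\mathbb{R}$ whose set of points of discontinuity is finite. $\chi_A$ is the characteristic function of $A$. $X$ is a nowhere almost $P$-space if $\chi_{\{p\}}\in T''(X)$ for all $p\in X$. *)

theory Defs
  imports "HOL-Analysis.Analysis"
begin

definition cozero_set :: "'a::topological_space set \<Rightarrow> bool" where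
  "cozero_set U \<longleftrightarrow> (\<exists>h :: 'a \<Rightarrow> real. continuous_on UNIV h \<and> U = {x. h x \<noteq> 0})"

definition T2prime :: "('a::topological_space \<Rightarrow> real) set" where
  "T2prime = {f. \<exists>U. cozero_set U \<and> closure U = UNIV \<and> continuous_on U f}"

definition CF :: "('a::topological_space \<Rightarrow> real) set" where
  "CF = {f. finite {x. \<not> (f \<longlongrightarrow> f x) (at x)}}"

definition nowhere_almost_P :: "'a::topological_space itself \<Rightarrow> bool" where
  "nowhere_almost_P _ \<longleftrightarrow> (\<forall>p::'a. (indicator {p} :: 'a \<Rightarrow> real) \<in> T2prime)"

end

theory Submission
  imports Defs
begin

lemma cozero_open: "cozero_set U \<Longrightarrow> open U"
proof -
  assume "cozero_set U"
  then obtain h :: "_ \<Rightarrow> real" where h: "continuous_on UNIV h" "U = {x. h x \<noteq> 0}"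
    unfolding cozero_set_def by blast
  have "U = h -` (- {0})" using h by auto
  then show "open U" using open_vimage[OF _ h(1)] by (simp add: open_Compl)
qed

lemma cozero_Int: "cozero_set U \<Longrightarrow> cozero_set V \<Longrightarrow> cozero_set (U \<inter> V)"
proof -
  assume "cozero_set U" "cozero_set V"
  then obtain h g :: "_ \<Rightarrow> real" where h: "continuous_on UNIV h" "U = {x. h x \<noteq> 0}"
    and g: "continuous_on UNIV g" "V = {x. g x \<noteq> 0}"
    unfolding cozero_set_def by blast
  have "continuous_on UNIV (\<lambda>x. h x * g x)" using h g by (intro continuous_intros)
  moreover have "U \<inter> V = {x. h x * g x \<noteq> 0}" using h g by auto
  ultimately show ?thesis unfolding cozero_set_def by blast
qed

lemma dense_Int: "open S \<Longrightarrow> closure S = UNIV \<Longrightarrow> closure T = UNIV \<Longrightarrow> closure (S \<inter> T) = UNIV"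
proof -
  assume a: "open S" "closure S = UNIV" "closure T = UNIV"
  have "S \<subseteq> closure (S \<inter> T)" using open_Int_closure_subset[OF a(1), of T] a(3) by simp
  then have "closure S \<subseteq> closure (S \<inter> T)" by (simp add: closure_minimal)
  then show ?thesis using a(2) by auto
qed

lemma isolated_if:
  fixes p :: "'a::t1_space"
  assumes "open U" "p \<in> U" "continuous_on U (indicator {p} :: 'a \<Rightarrow> real)"
  shows "open {p}"
proof -
  have "((indicator {p} :: 'a \<Rightarrow> real) \<longlongrightarrow> indicator {p} p) (at p within U)"
    using assms(2,3) unfolding continuous_on_def by blast
  then have "((indicator {p} :: 'a \<Rightarrow> real) \<longlongrightarrow> 1) (at p)"
    using at_within_open[OF assms(2,1)] by simp
  then have "eventually (\<lambda>x. (indicator {p} x :: real) > 1/2) (at p)"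
    by (rule order_tendstoD) simp
  moreover have "eventually (\<lambda>x. x \<noteq> p) (at p)" by (simp add: eventually_at_filter)
  ultimately have "eventually (\<lambda>x. False) (at p)"
    by eventually_elim (simp add: indicator_def)
  then have "at p = bot" by (simp add: trivial_limit_def)
  then show ?thesis by (simp add: at_eq_bot_iff)
qed

lemma avoid:
  fixes D :: "'a::t1_space set"
  assumes "finite D" "\<forall>d\<in>D. \<not> open {d}" "nowhere_almost_P TYPE('a)"
  shows "\<exists>U. cozero_set U \<and> closure U = UNIV \<and> U \<inter> D = {}"
  using assms(1,2)
proof (induction D rule: finite_induct)
  case empty
  have "cozero_set (UNIV :: 'a set)" unfolding cozero_set_def
    by (rule exI[of _ "\<lambda>_. 1"]) auto
  then show ?case by auto
next
  case (insert d D)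
  then obtain U where U: "cozero_set U" "closure U = UNIV" "U \<inter> D = {}" by auto
  from assms(3) obtain V where V: "cozero_set V" "closure V = UNIV"
    "continuous_on V (indicator {d} :: 'a \<Rightarrow> real)"
    unfolding nowhere_almost_P_def T2prime_def by blast
  have "d \<notin> V" using isolated_if[OF cozero_open[OF V(1)] _ V(3)] insert.prems by auto
  have "cozero_set (U \<inter> V)" using U V cozero_Int by blast
  moreover have "closure (U \<inter> V) = UNIV" using dense_Int cozero_open U V by blast
  moreover have "(U \<inter> V) \<inter> insert d D = {}" using U(3) \<open>d \<notin> V\<close> by auto
  ultimately show ?case by blast
qed

theorem theorem4p2:
  shows "(CF :: ('a::t1_space \<Rightarrow> real) set) \<subseteq> T2prime \<longleftrightarrow> nowhere_almost_P TYPE('a)"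
proof
  assume A: "(CF :: ('a::t1_space \<Rightarrow> real) set) \<subseteq> T2prime"
  show "nowhere_almost_P TYPE('a)" unfolding nowhere_almost_P_def
  proof
    fix p :: 'a
    have "{x. \<not> ((indicator {p} :: 'a \<Rightarrow> real) \<longlongrightarrow> indicator {p} x) (at x)} \<subseteq> {p}"
    proof
      fix x assume x: "x \<in> {x. \<not> ((indicator {p} :: 'a \<Rightarrow> real) \<longlongrightarrow> indicator {p} x) (at x)}"
      show "x \<in> {p}"
      proof (rule ccontr)
        assume "x \<notin> {p}"
        then have "eventually (\<lambda>y. y \<in> - {p}) (nhds x)"
          by (intro eventually_nhds_in_open) (auto simp: open_Compl)
        then have "eventually (\<lambda>y. (indicator {p} y :: real) = indicator {p} x) (at x)"
          using \<open>x \<notin> {p}\<close> by (auto simp: eventually_at_filter elim: eventually_mono)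
        then have "((indicator {p} :: 'a \<Rightarrow> real) \<longlongrightarrow> indicator {p} x) (at x)"
          by (rule tendsto_eventually)
        then show False using x by simp
      qed
    qed
    then have "(indicator {p} :: 'a \<Rightarrow> real) \<in> CF" unfolding CF_def
      using finite_subset by auto
    then show "(indicator {p} :: 'a \<Rightarrow> real) \<in> T2prime" using A by blast
  qed
next
  assume N: "nowhere_almost_P TYPE('a)"
  show "(CF :: ('a::t1_space \<Rightarrow> real) set) \<subseteq> T2prime"
  proof
    fix f :: "'a \<Rightarrow> real" assume "f \<in> CF"
    then have fin: "finite {x. \<not> (f \<longlongrightarrow> f x) (at x)}" (is "finite ?D") by (simp add: CF_def)
    have "\<forall>d\<in>?D. \<not> open {d}"
    proof
      fix d assume d: "d \<in> ?D"
      show "\<not> open {d}"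
      proof
        assume "open {d}"
        then have "at d = bot" by (simp add: at_eq_bot_iff)
        then show False using d by simp
      qed
    qed
    from avoid[OF fin this N] obtain U where U: "cozero_set U" "closure U = UNIV" "U \<inter> ?D = {}"
      by blast
    have "continuous_on U f" unfolding continuous_on_def
    proof
      fix x assume "x \<in> U"
      then have "(f \<longlongrightarrow> f x) (at x)" using U(3) by blast
      then show "(f \<longlongrightarrow> f x) (at x within U)" by (rule tendsto_within_subset) simp
    qed
    then show "f \<in> T2prime" unfolding T2prime_def using U by blast
  qed
qed

end
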